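(* If a graph $G$ has a min-max clique covering that satisfies simple intersection, then the compressed cliques graph of $G$ is unique up to isomorphism; that is, the compressed cliques graphs of $G$ constructed from any two min-max clique coverings of $G$ satisfying simple intersection are isomorphic.
   Context: A clique covering of $G$ is a set of cliques such that every edge lies in at least one of them; $\operatorname{cc}(G)$ is the minimum size of one. A min-max clique covering is a clique covering of size $\operatorname{cc}(G)$ consisting of maximal cliques. It has simple intersection if no three distinct cliques of it have a common vertex. Given such a covering $\{C_1,\dots,C_\ell\}$, for distinct $i,j$ put $C_{i,j}=C_i\cap C_j$ and $C_{i,i}=C_i\setminus\bigcup_{j\ne i}C_j$. The compressed cliques graph with respect to this covering has one vertex $v_{i,j}$ for each non-empty set $C_{i,j}$ (including $i=j$), and $v_{i,j}$, $v_{i',j'}$ are adjacent iff $\{i,j\}\cap\{i',j'\}\neq\emptyset$. *)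

theory Defs
  imports Main
begin

definition graph :: "'a set \<Rightarrow> ('a \<Rightarrow> 'a \<Rightarrow> bool) \<Rightarrow> bool" where
  "graph V E \<longleftrightarrow> finite V \<and> (\<forall>u v. E u v \<longrightarrow> u \<in> V \<and> v \<in> V)
     \<and> (\<forall>u v. E u v \<longrightarrow> E v u) \<and> (\<forall>v. \<not> E v v)"

definition clique :: "'a set \<Rightarrow> ('a \<Rightarrow> 'a \<Rightarrow> bool) \<Rightarrow> 'a set \<Rightarrow> bool" where
  "clique V E C \<longleftrightarrow> C \<subseteq> V \<and> (\<forall>u\<in>C. \<forall>v\<in>C. u \<noteq> v \<longrightarrow> E u v)"

definition maximal_clique :: "'a set \<Rightarrow> ('a \<Rightarrow> 'a \<Rightarrow> bool) \<Rightarrow> 'a set \<Rightarrow> bool" where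
  "maximal_clique V E C \<longleftrightarrow> clique V E C \<and> (\<forall>D. clique V E D \<and> C \<subseteq> D \<longrightarrow> D = C)"

definition clique_covering :: "'a set \<Rightarrow> ('a \<Rightarrow> 'a \<Rightarrow> bool) \<Rightarrow> 'a set set \<Rightarrow> bool" where
  "clique_covering V E \<C> \<longleftrightarrow> finite \<C> \<and> (\<forall>C\<in>\<C>. clique V E C)
     \<and> (\<forall>u v. E u v \<longrightarrow> (\<exists>C\<in>\<C>. u \<in> C \<and> v \<in> C))"

definition cc :: "'a set \<Rightarrow> ('a \<Rightarrow> 'a \<Rightarrow> bool) \<Rightarrow> nat" where
  "cc V E = (LEAST n. \<exists>\<C>. clique_covering V E \<C> \<and> card \<C> = n)"

definition min_max_clique_covering :: "'a set \<Rightarrow> ('a \<Rightarrow> 'a \<Rightarrow> bool) \<Rightarrow> 'a set set \<Rightarrow> bool" where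
  "min_max_clique_covering V E \<C> \<longleftrightarrow> clique_covering V E \<C> \<and> card \<C> = cc V E
     \<and> (\<forall>C\<in>\<C>. maximal_clique V E C)"

definition simple_intersection :: "'a set set \<Rightarrow> bool" where
  "simple_intersection \<C> \<longleftrightarrow>
     (\<forall>A\<in>\<C>. \<forall>B\<in>\<C>. \<forall>C\<in>\<C>. A \<noteq> B \<and> A \<noteq> C \<and> B \<noteq> C \<longrightarrow> A \<inter> B \<inter> C = {})"

definition cpart :: "'a set set \<Rightarrow> 'a set \<Rightarrow> 'a set \<Rightarrow> 'a set" where
  "cpart \<C> C D = (if C = D then C - \<Union>(\<C> - {C}) else C \<inter> D)"

text \<open>Vertices of the compressed cliques graph: the unordered index pairs {C_i, C_j}
  (with i = j allowed, giving a singleton) whose set C_{i,j} is non-empty.\<close>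
definition ccg_verts :: "'a set set \<Rightarrow> 'a set set set" where
  "ccg_verts \<C> = {{C, D} | C D. C \<in> \<C> \<and> D \<in> \<C> \<and> cpart \<C> C D \<noteq> {}}"

definition ccg_adj :: "'a set set \<Rightarrow> 'a set set \<Rightarrow> bool" where
  "ccg_adj p q \<longleftrightarrow> p \<noteq> q \<and> p \<inter> q \<noteq> {}"

definition graph_iso :: "'b set \<Rightarrow> ('b \<Rightarrow> 'b \<Rightarrow> bool) \<Rightarrow> 'c set \<Rightarrow> ('c \<Rightarrow> 'c \<Rightarrow> bool) \<Rightarrow> bool" where
  "graph_iso V1 E1 V2 E2 \<longleftrightarrow> (\<exists>f. bij_betw f V1 V2 \<and> (\<forall>u\<in>V1. \<forall>v\<in>V1. E1 u v \<longleftrightarrow> E2 (f u) (f v)))"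

end

theory Submission
  imports Defs
begin

definition idx :: "'a set set \<Rightarrow> 'a \<Rightarrow> 'a set set" where
  "idx \<C> v = {C\<in>\<C>. v \<in> C}"

definition nbc :: "('a \<Rightarrow> 'a \<Rightarrow> bool) \<Rightarrow> 'a \<Rightarrow> 'a set" where
  "nbc E v = {u. u = v \<or> E v u}"

lemma cov_edge:
  assumes "clique_covering V E \<C>" "E a b"
  shows "\<exists>C\<in>\<C>. a \<in> C \<and> b \<in> C"
  using assms by (simp add: clique_covering_def)

lemma idx_char:
  assumes g: "graph V E" and m: "\<forall>C\<in>\<C>. maximal_clique V E C" and v: "v \<in> V"
  shows "idx \<C> v = {C\<in>\<C>. C \<subseteq> nbc E v}"
proof
  show "idx \<C> v \<subseteq> {C\<in>\<C>. C \<subseteq> nbc E v}"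
  proof
    fix C assume "C \<in> idx \<C> v"
    hence C: "C \<in> \<C>" "v \<in> C" by (auto simp: idx_def)
    hence "clique V E C" using m by (auto simp: maximal_clique_def)
    hence "C \<subseteq> nbc E v" using C by (auto simp: clique_def nbc_def)
    thus "C \<in> {C\<in>\<C>. C \<subseteq> nbc E v}" using C by auto
  qed
next
  show "{C\<in>\<C>. C \<subseteq> nbc E v} \<subseteq> idx \<C> v"
  proof
    fix C assume "C \<in> {C\<in>\<C>. C \<subseteq> nbc E v}"
    hence C: "C \<in> \<C>" "C \<subseteq> nbc E v" by auto
    hence mc: "maximal_clique V E C" using m by auto
    hence cl: "clique V E C" by (auto simp: maximal_clique_def)
    have sym: "\<And>x y. E x y \<Longrightarrow> E y x" using g by (auto simp: graph_def)
    have "clique V E (insert v C)"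
      unfolding clique_def
    proof (intro conjI ballI impI)
      show "insert v C \<subseteq> V" using cl v by (auto simp: clique_def)
    next
      fix x y assume xy: "x \<in> insert v C" "y \<in> insert v C" "x \<noteq> y"
      show "E x y"
      proof (cases "x = v")
        case True
        then have "y \<in> C" using xy by auto
        then show ?thesis using C(2) True xy(3) by (auto simp: nbc_def)
      next
        case False
        then have x: "x \<in> C" using xy by auto
        show ?thesis
        proof (cases "y = v")
          case True
          then have "E v x" using C(2) x False by (auto simp: nbc_def)
          then show ?thesis using True sym by auto
        next
          case False
          then show ?thesis using x xy cl by (auto simp: clique_def)
        qed
      qed
    qed
    hence "insert v C = C" using mc by (auto simp: maximal_clique_def)
    thus "C \<in> idx \<C> v" using C by (auto simp: idx_def)
  qed
qed

lemma nonisolated: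
  assumes g: "graph V E" and m: "min_max_clique_covering V E \<C>" and C: "C \<in> \<C>" "v \<in> C"
  shows "\<exists>u. E v u"
proof (rule ccontr)
  assume na: "\<not> (\<exists>u. E v u)"
  have cov: "clique_covering V E \<C>" and ccd: "card \<C> = cc V E"
    using m by (auto simp: min_max_clique_covering_def)
  have fin: "finite \<C>" using cov by (auto simp: clique_covering_def)
  have "clique V E C" using cov C by (auto simp: clique_covering_def)
  hence Cv: "C = {v}" using C na by (auto simp: clique_def)
  have irr: "\<And>x. \<not> E x x" using g by (auto simp: graph_def)
  have "clique_covering V E (\<C> - {C})"
    unfolding clique_covering_def
  proof (intro conjI allI impI)
    show "finite (\<C> - {C})" using fin by auto
    show "\<forall>C\<in>\<C> - {C}. clique V E C" using cov by (auto simp: clique_covering_def)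
  next
    fix a b assume ab: "E a b"
    then obtain D where D: "D \<in> \<C>" "a \<in> D" "b \<in> D" using cov_edge[OF cov] by blast
    have "D \<noteq> C"
    proof
      assume "D = C"
      hence "a = b" using D Cv by auto
      thus False using ab irr by auto
    qed
    thus "\<exists>D\<in>\<C> - {C}. a \<in> D \<and> b \<in> D" using D by auto
  qed
  hence "cc V E \<le> card (\<C> - {C})"
    unfolding cc_def by (intro Least_le) blast
  moreover have "card (\<C> - {C}) < card \<C>" using fin C by (meson card_Diff1_less)
  ultimately show False using ccd by simp
qed

lemma nbc_union:
  assumes cov: "clique_covering V E \<C>" and v: "\<exists>u. E v u"
  shows "nbc E v = \<Union>(idx \<C> v)"
proof
  show "nbc E v \<subseteq> \<Union>(idx \<C> v)"
  proof
    fix u assume "u \<in> nbc E v"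
    hence u: "u = v \<or> E v u" by (auto simp: nbc_def)
    obtain w where w: "E v w" using v by auto
    show "u \<in> \<Union>(idx \<C> v)"
    proof (cases "u = v")
      case True
      then show ?thesis using cov_edge[OF cov w] by (auto simp: idx_def)
    next
      case False
      then show ?thesis using u cov_edge[OF cov] by (auto simp: idx_def)
    qed
  qed
next
  show "\<Union>(idx \<C> v) \<subseteq> nbc E v"
  proof
    fix x assume "x \<in> \<Union>(idx \<C> v)"
    then obtain X where X: "X \<in> \<C>" "v \<in> X" "x \<in> X" by (auto simp: idx_def)
    have "clique V E X" using cov X by (simp add: clique_covering_def)
    thus "x \<in> nbc E v" using X by (auto simp: clique_def nbc_def)
  qed
qed

lemma idx_eq_iff:
  assumes g: "graph V E" and m: "min_max_clique_covering V E \<C>"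
    and v: "\<exists>u. E v u" and w: "\<exists>u. E w u"
  shows "idx \<C> v = idx \<C> w \<longleftrightarrow> nbc E v = nbc E w"
proof -
  have cov: "clique_covering V E \<C>" and mx: "\<forall>C\<in>\<C>. maximal_clique V E C"
    using m by (auto simp: min_max_clique_covering_def)
  have vV: "v \<in> V" "w \<in> V" using g v w by (auto simp: graph_def)
  show ?thesis
    using idx_char[OF g mx vV(1)] idx_char[OF g mx vV(2)]
      nbc_union[OF cov v] nbc_union[OF cov w] by metis
qed

lemma idx_meet:
  assumes g: "graph V E" and m: "min_max_clique_covering V E \<C>"
    and v: "\<exists>u. E v u" and w: "\<exists>u. E w u"
  shows "idx \<C> v \<inter> idx \<C> w \<noteq> {} \<longleftrightarrow> v = w \<or> E v w"
proof -
  have cov: "clique_covering V E \<C>"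
    using m by (auto simp: min_max_clique_covering_def)
  show ?thesis
  proof
    assume "idx \<C> v \<inter> idx \<C> w \<noteq> {}"
    then obtain C where "C \<in> \<C>" "v \<in> C" "w \<in> C" by (auto simp: idx_def)
    thus "v = w \<or> E v w" using cov by (auto simp: clique_covering_def clique_def)
  next
    assume "v = w \<or> E v w"
    thus "idx \<C> v \<inter> idx \<C> w \<noteq> {}"
    proof
      assume "v = w"
      obtain u where "E v u" using v by auto
      then show ?thesis using cov_edge[OF cov \<open>E v u\<close>] \<open>v = w\<close> by (auto simp: idx_def)
    next
      assume "E v w"
      then show ?thesis using cov_edge[OF cov] by (auto simp: idx_def)
    qed
  qed
qed

lemma verts_eq:
  assumes g: "graph V E" and m: "min_max_clique_covering V E \<C>" and si: "simple_intersection \<C>"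
  shows "ccg_verts \<C> = idx \<C> ` {v. \<exists>u. E v u}"
proof
  have cov: "clique_covering V E \<C>"
    using m by (auto simp: min_max_clique_covering_def)
  show "ccg_verts \<C> \<subseteq> idx \<C> ` {v. \<exists>u. E v u}"
  proof
    fix p assume "p \<in> ccg_verts \<C>"
    then obtain C D where p: "p = {C, D}" "C \<in> \<C>" "D \<in> \<C>" "cpart \<C> C D \<noteq> {}"
      by (auto simp: ccg_verts_def)
    then obtain v where v: "v \<in> cpart \<C> C D" by auto
    show "p \<in> idx \<C> ` {v. \<exists>u. E v u}"
    proof (cases "C = D")
      case True
      hence "v \<in> C" "\<forall>D\<in>\<C>. D \<noteq> C \<longrightarrow> v \<notin> D" using v by (auto simp: cpart_def)
      hence "idx \<C> v = p" using p True by (auto simp: idx_def)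
      moreover have "\<exists>u. E v u" using nonisolated[OF g m p(2) \<open>v \<in> C\<close>] .
      ultimately show ?thesis by auto
    next
      case False
      hence vC: "v \<in> C" "v \<in> D" using v by (auto simp: cpart_def)
      have "idx \<C> v = p"
      proof
        show "p \<subseteq> idx \<C> v" using p vC by (auto simp: idx_def)
        show "idx \<C> v \<subseteq> p"
        proof
          fix F assume "F \<in> idx \<C> v"
          hence F: "F \<in> \<C>" "v \<in> F" by (auto simp: idx_def)
          show "F \<in> p"
          proof (rule ccontr)
            assume "F \<notin> p"
            hence "C \<inter> D \<inter> F = {}" using si p False F unfolding simple_intersection_def by auto
            thus False using vC F by auto
          qed
        qed
      qed
      moreover have "\<exists>u. E v u" using nonisolated[OF g m p(2) vC(1)] .
      ultimately show ?thesis by auto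
    qed
  qed
next
  have cov: "clique_covering V E \<C>"
    using m by (auto simp: min_max_clique_covering_def)
  show "idx \<C> ` {v. \<exists>u. E v u} \<subseteq> ccg_verts \<C>"
  proof
    fix p assume "p \<in> idx \<C> ` {v. \<exists>u. E v u}"
    then obtain v u where p: "p = idx \<C> v" and vu: "E v u" by auto
    then obtain C where C: "C \<in> \<C>" "v \<in> C" using cov_edge[OF cov vu] by blast
    show "p \<in> ccg_verts \<C>"
    proof (cases "\<exists>D\<in>\<C>. D \<noteq> C \<and> v \<in> D")
      case True
      then obtain D where D: "D \<in> \<C>" "D \<noteq> C" "v \<in> D" by auto
      have "p = {C, D}"
      proof
        show "{C, D} \<subseteq> p" using p C D by (auto simp: idx_def)
        show "p \<subseteq> {C, D}"
        proof
          fix F assume "F \<in> p"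
          hence F: "F \<in> \<C>" "v \<in> F" using p by (auto simp: idx_def)
          show "F \<in> {C, D}"
          proof (rule ccontr)
            assume "F \<notin> {C, D}"
            hence "C \<inter> D \<inter> F = {}" using si C D F unfolding simple_intersection_def by auto
            thus False using C D F by auto
          qed
        qed
      qed
      moreover have "cpart \<C> C D \<noteq> {}" using C D by (auto simp: cpart_def)
      ultimately show ?thesis using C D unfolding ccg_verts_def by blast
    next
      case False
      hence "p = {C, C}" using p C by (auto simp: idx_def)
      moreover have "v \<in> cpart \<C> C C" using C False by (auto simp: cpart_def)
      ultimately show ?thesis using C unfolding ccg_verts_def by blast
    qed
  qed
qed

lemma transfer_bij:
  assumes "g1 ` A = B1" "g2 ` A = B2" "\<forall>x\<in>A. \<forall>y\<in>A. g1 x = g1 y \<longleftrightarrow> g2 x = g2 y"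
  shows "\<exists>f. bij_betw f B1 B2 \<and> (\<forall>x\<in>A. f (g1 x) = g2 x)"
proof -
  define f where "f p = g2 (SOME x. x \<in> A \<and> g1 x = p)" for p
  have fx: "\<forall>x\<in>A. f (g1 x) = g2 x"
  proof
    fix x assume x: "x \<in> A"
    have "\<exists>y. y \<in> A \<and> g1 y = g1 x" using x by auto
    hence "(SOME y. y \<in> A \<and> g1 y = g1 x) \<in> A \<and> g1 (SOME y. y \<in> A \<and> g1 y = g1 x) = g1 x"
      by (rule someI_ex)
    thus "f (g1 x) = g2 x" using assms(3) x unfolding f_def by blast
  qed
  have "bij_betw f B1 B2"
    unfolding bij_betw_def inj_on_def
  proof (intro conjI ballI impI)
    fix p q assume "p \<in> B1" "q \<in> B1" "f p = f q"
    then obtain x y where "x \<in> A" "y \<in> A" "p = g1 x" "q = g1 y" "f p = f q" using assms(1) by auto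
    thus "p = q" using fx assms(3) by metis
  next
    show "f ` B1 = B2" using assms(1,2) fx by (auto simp: image_iff) 
  qed
  thus ?thesis using fx by auto
qed

theorem mainTheorem3:
  fixes V :: "'a set" and E :: "'a \<Rightarrow> 'a \<Rightarrow> bool" and \<C>1 \<C>2 :: "'a set set"
  assumes "graph V E"
    and "min_max_clique_covering V E \<C>1" and "simple_intersection \<C>1"
    and "min_max_clique_covering V E \<C>2" and "simple_intersection \<C>2"
  shows "graph_iso (ccg_verts \<C>1) ccg_adj (ccg_verts \<C>2) ccg_adj"
proof -
  let ?A = "{v. \<exists>u. E v u}"
  have eq: "\<forall>x\<in>?A. \<forall>y\<in>?A. idx \<C>1 x = idx \<C>1 y \<longleftrightarrow> idx \<C>2 x = idx \<C>2 y"
    using idx_eq_iff[OF assms(1) assms(2)] idx_eq_iff[OF assms(1) assms(4)] by auto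
  obtain f where f: "bij_betw f (ccg_verts \<C>1) (ccg_verts \<C>2)"
    "\<forall>x\<in>?A. f (idx \<C>1 x) = idx \<C>2 x"
    using transfer_bij[OF verts_eq[OF assms(1-3), symmetric] verts_eq[OF assms(1,4,5), symmetric] eq]
    by blast
  have "\<forall>p\<in>ccg_verts \<C>1. \<forall>q\<in>ccg_verts \<C>1. ccg_adj p q \<longleftrightarrow> ccg_adj (f p) (f q)"
  proof (intro ballI)
    fix p q assume "p \<in> ccg_verts \<C>1" "q \<in> ccg_verts \<C>1"
    then obtain x y where xy: "x \<in> ?A" "y \<in> ?A" "p = idx \<C>1 x" "q = idx \<C>1 y"
      using verts_eq[OF assms(1-3)] by auto
    have "f p = idx \<C>2 x" "f q = idx \<C>2 y" using f(2) xy by auto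
    moreover have "idx \<C>1 x \<inter> idx \<C>1 y \<noteq> {} \<longleftrightarrow> idx \<C>2 x \<inter> idx \<C>2 y \<noteq> {}"
      using idx_meet[OF assms(1) assms(2)] idx_meet[OF assms(1) assms(4)] xy by auto
    ultimately show "ccg_adj p q \<longleftrightarrow> ccg_adj (f p) (f q)"
      using eq xy unfolding ccg_adj_def by auto
  qed
  thus ?thesis using f(1) unfolding graph_iso_def by blast
qed

end
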